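(* Let $X$ be a space and let $n \ge 0$. Then for every $\gamma \in \pi_0(L^n X)$ there is a unique pair consisting of \begin{itemize} \item an order-preserving injection $\iota\colon [k] \hookrightarrow [n]$, and \item a new element $\gamma' \in \pi_0(L^k X)$, \end{itemize} such that $\gamma$ is the image of $\gamma'$ under the map $\pi_0(L^kX)\to\pi_0(L^nX)$ induced by the standard projection associated with $\iota$.
   Context: For $n\ge 0$ write $[n]=\{1,\dots,n\}$, $\mathbb{T}^n=(S^1)^n$, and $L^nX = \mathrm{Map}(\mathbb{T}^n, X)$; thus $L^1 X= LX$ is the free loop space and $L^0X=X$. An order-preserving injection $\iota\colon [k] \hookrightarrow [n]$ induces the standard projection $\mathbb{T}^n \to \mathbb{T}^k$, which is the projection onto the coordinates in the image of $\iota$. By precomposition, this projection induces a map $L^kX \to L^nX$. An element of $\pi_0(L^nX)$ is called old if it lies in the image of $\pi_0(L^kX)\to\pi_0(L^nX)$ for some standard projection with $k<n$. Otherwise it is called new. *)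

theory Defs
  imports "HOL-Analysis.Analysis"
begin

definition circle :: "complex topology" where
  "circle = subtopology euclidean (sphere 0 1)"

definition torus :: "nat \<Rightarrow> (nat \<Rightarrow> complex) topology" where
  "torus n = product_topology (\<lambda>i. circle) {1..n}"

definition ord_inj :: "nat \<Rightarrow> nat \<Rightarrow> (nat \<Rightarrow> nat) \<Rightarrow> bool" where
  "ord_inj k n \<iota> \<longleftrightarrow> \<iota> \<in> {1..k} \<rightarrow>\<^sub>E {1..n} \<and> strict_mono_on {1..k} \<iota>"

definition std_proj :: "nat \<Rightarrow> (nat \<Rightarrow> nat) \<Rightarrow> (nat \<Rightarrow> complex) \<Rightarrow> (nat \<Rightarrow> complex)" where
  "std_proj k \<iota> t = restrict (\<lambda>j. t (\<iota> j)) {1..k}"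

text \<open>pi_0(L^n X): path components of Map(T^n,X), i.e. homotopy classes of continuous
  maps T^n \<rightarrow> X (via the exponential law, T^n being compact Hausdorff).\<close>
definition hclass :: "'a topology \<Rightarrow> nat \<Rightarrow> ((nat \<Rightarrow> complex) \<Rightarrow> 'a) \<Rightarrow> ((nat \<Rightarrow> complex) \<Rightarrow> 'a) set" where
  "hclass X n f = {g. continuous_map (torus n) X g \<and> homotopic_with (\<lambda>_. True) (torus n) X f g}"

definition pi0L :: "'a topology \<Rightarrow> nat \<Rightarrow> ((nat \<Rightarrow> complex) \<Rightarrow> 'a) set set" where
  "pi0L X n = hclass X n ` {f. continuous_map (torus n) X f}"

definition induced :: "'a topology \<Rightarrow> nat \<Rightarrow> nat \<Rightarrow> (nat \<Rightarrow> nat)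
    \<Rightarrow> ((nat \<Rightarrow> complex) \<Rightarrow> 'a) set \<Rightarrow> ((nat \<Rightarrow> complex) \<Rightarrow> 'a) set" where
  "induced X n k \<iota> c = {g. continuous_map (torus n) X g \<and>
      (\<exists>f\<in>c. homotopic_with (\<lambda>_. True) (torus n) X (f \<circ> std_proj k \<iota>) g)}"

definition old :: "'a topology \<Rightarrow> nat \<Rightarrow> ((nat \<Rightarrow> complex) \<Rightarrow> 'a) set \<Rightarrow> bool" where
  "old X n c \<longleftrightarrow> (\<exists>k \<iota> c'. k < n \<and> ord_inj k n \<iota> \<and> c' \<in> pi0L X k \<and> c = induced X n k \<iota> c')"

definition new :: "'a topology \<Rightarrow> nat \<Rightarrow> ((nat \<Rightarrow> complex) \<Rightarrow> 'a) set \<Rightarrow> bool" where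
  "new X n c \<longleftrightarrow> c \<in> pi0L X n \<and> \<not> old X n c"

end

theory Submission
  imports Defs
begin

lemma topspace_torus: "topspace (torus n) = PiE {1..n} (\<lambda>i. sphere 0 1)"
  by (simp add: torus_def circle_def)

lemma cont_std_proj:
  assumes "\<iota> \<in> {1..k} \<rightarrow> {1..n}"
  shows "continuous_map (torus n) (torus k) (std_proj k \<iota>)"
  unfolding torus_def
proof (subst continuous_map_componentwise, intro conjI ballI)
  show "std_proj k \<iota> ` topspace (product_topology (\<lambda>i. circle) {1..n}) \<subseteq> extensional {1..k}"
    by (auto simp: std_proj_def)
  fix j assume j: "j \<in> {1..k}"
  have "continuous_map (product_topology (\<lambda>i. circle) {1..n}) circle (\<lambda>x. x (\<iota> j))"
    using assms j by (intro continuous_map_product_projection) auto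
  then show "continuous_map (product_topology (\<lambda>i. circle) {1..n}) circle (\<lambda>x. std_proj k \<iota> x j)"
    using j by (simp add: std_proj_def)
qed

lemma std_proj_comp:
  assumes "\<kappa> \<in> {1..m} \<rightarrow> {1..k}"
  shows "std_proj m \<kappa> (std_proj k \<iota> t) = std_proj m (restrict (\<iota> \<circ> \<kappa>) {1..m}) t"
  using assms by (auto simp: std_proj_def restrict_def fun_eq_iff)

lemma ord_inj_comp:
  assumes "ord_inj m k \<kappa>" "ord_inj k n \<iota>"
  shows "ord_inj m n (restrict (\<iota> \<circ> \<kappa>) {1..m})"
  using assms unfolding ord_inj_def strict_mono_on_def by (auto simp: PiE_def Pi_def)

lemma hclass_eq:
  assumes "continuous_map (torus n) X f" "continuous_map (torus n) X g"
  shows "hclass X n f = hclass X n g \<longleftrightarrow> homotopic_with (\<lambda>_. True) (torus n) X f g"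
proof
  assume "hclass X n f = hclass X n g"
  then have "g \<in> hclass X n f" using assms by (simp add: hclass_def)
  then show "homotopic_with (\<lambda>_. True) (torus n) X f g" by (simp add: hclass_def)
next
  assume h: "homotopic_with (\<lambda>_. True) (torus n) X f g"
  show "hclass X n f = hclass X n g"
    unfolding hclass_def
    using homotopic_with_trans[OF h] homotopic_with_trans[OF homotopic_with_symD[OF h]] by auto
qed

lemma induced_hclass:
  assumes f: "continuous_map (torus k) X f" and i: "\<iota> \<in> {1..k} \<rightarrow> {1..n}"
  shows "induced X n k \<iota> (hclass X k f) = hclass X n (f \<circ> std_proj k \<iota>)"
proof -
  have P: "continuous_map (torus n) (torus k) (std_proj k \<iota>)" using cont_std_proj[OF i] .
  show ?thesis
    unfolding induced_def hclass_def
  proof (intro set_eqI iffI; clarsimp)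
    fix g f' assume g: "continuous_map (torus n) X g"
      and f': "continuous_map (torus k) X f'" "homotopic_with (\<lambda>_. True) (torus k) X f f'"
      and h: "homotopic_with (\<lambda>_. True) (torus n) X (f' \<circ> std_proj k \<iota>) g"
    have "homotopic_with (\<lambda>_. True) (torus n) X (f \<circ> std_proj k \<iota>) (f' \<circ> std_proj k \<iota>)"
      by (rule homotopic_with_compose_continuous_map_right[OF f'(2) P]) auto
    then show "homotopic_with (\<lambda>_. True) (torus n) X (f \<circ> std_proj k \<iota>) g"
      using h homotopic_with_trans by blast
  next
    fix g assume g: "continuous_map (torus n) X g"
      and h: "homotopic_with (\<lambda>_. True) (torus n) X (f \<circ> std_proj k \<iota>) g"
    show "\<exists>f'. continuous_map (torus k) X f' \<and> homotopic_with (\<lambda>_. True) (torus k) X f f' \<and>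
          homotopic_with (\<lambda>_. True) (torus n) X (f' \<circ> std_proj k \<iota>) g"
      using f h by (intro exI[of _ f]) auto
  qed
qed

lemma ord_inj_Pi: "ord_inj k n \<iota> \<Longrightarrow> \<iota> \<in> {1..k} \<rightarrow> {1..n}"
  by (auto simp: ord_inj_def)

lemma ord_inj_unique:
  assumes "ord_inj k1 n \<iota>1" "ord_inj k2 n \<iota>2" "\<iota>1 ` {1..k1} = \<iota>2 ` {1..k2}"
  shows "k1 = k2 \<and> \<iota>1 = \<iota>2"
proof -
  have inj1: "inj_on \<iota>1 {1..k1}" and inj2: "inj_on \<iota>2 {1..k2}"
    using assms by (auto simp: ord_inj_def intro: strict_mono_on_imp_inj_on)
  have "k1 = card (\<iota>1 ` {1..k1})" using card_image[OF inj1] by simp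
  also have "\<dots> = k2" using assms(3) card_image[OF inj2] by simp
  finally have k: "k1 = k2" .
  have ss: "sorted_wrt (<) (map \<iota> [1..<Suc k])" if "ord_inj k n \<iota>" for k \<iota>
    using that unfolding ord_inj_def strict_mono_on_def
    by (auto simp: sorted_wrt_iff_nth_less nth_upt simp del: upt_Suc)
  have "map \<iota>1 [1..<Suc k1] = map \<iota>2 [1..<Suc k1]"
    using strict_sorted_equal[OF ss[OF assms(1)] ss[OF assms(2)]] assms(3) k
    by (metis atLeastLessThanSuc_atLeastAtMost set_map set_upt)
  then have "\<forall>j\<in>{1..k1}. \<iota>1 j = \<iota>2 j" by (simp add: map_eq_conv del: upt_Suc)
  moreover have "\<iota>1 \<in> extensional {1..k1}" "\<iota>2 \<in> extensional {1..k1}"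
    using assms k by (auto simp: ord_inj_def PiE_def)
  ultimately have "\<iota>1 = \<iota>2" using extensionalityI by blast
  with k show ?thesis by simp
qed

lemma ord_inj_exists:
  assumes "S \<subseteq> {1..N}"
  shows "\<exists>\<kappa>. ord_inj (card S) N \<kappa> \<and> \<kappa> ` {1..card S} = S"
proof -
  have fin: "finite S" using assms finite_subset by blast
  define xs where "xs = sorted_list_of_set S"
  have xs: "sorted_wrt (<) xs" "set xs = S" "length xs = card S"
    using fin by (auto simp: xs_def)
  define \<kappa> where "\<kappa> = restrict (\<lambda>i. xs ! (i - 1)) {1..card S}"
  have img: "\<kappa> ` {1..card S} = S"
  proof -
    have e: "{1..card S} = Suc ` {..<card S}"
      by (simp add: atLeastLessThanSuc_atLeastAtMost lessThan_atLeast0)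
    have "\<kappa> ` {1..card S} = \<kappa> ` Suc ` {..<card S}" using e by simp
    also have "\<dots> = (\<lambda>i. xs ! i) ` {..<card S}"
      unfolding image_image by (rule image_cong) (auto simp: \<kappa>_def)
    also have "\<dots> = set xs" using xs(3) by (auto simp: set_conv_nth)
    finally show ?thesis using xs by simp
  qed
  have "ord_inj (card S) N \<kappa>"
    unfolding ord_inj_def
  proof
    show "\<kappa> \<in> {1..card S} \<rightarrow>\<^sub>E {1..N}" using img assms by (auto simp: \<kappa>_def)
    show "strict_mono_on {1..card S} \<kappa>"
      unfolding strict_mono_on_def \<kappa>_def using xs
      by (auto simp: sorted_wrt_iff_nth_less)
  qed
  with img show ?thesis by blast
qed

definition sel :: "nat \<Rightarrow> nat set \<Rightarrow> (nat \<Rightarrow> nat) \<Rightarrow> (nat \<Rightarrow> complex) \<Rightarrow> (nat \<Rightarrow> complex)" where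
  "sel k D \<phi> s = restrict (\<lambda>i. if i \<in> D then s (\<phi> i) else 1) {1..k}"

lemma cont_sel:
  assumes "\<And>i. i \<in> D \<Longrightarrow> i \<in> {1..k} \<Longrightarrow> \<phi> i \<in> {1..m}"
  shows "continuous_map (torus m) (torus k) (sel k D \<phi>)"
  unfolding torus_def
proof (subst continuous_map_componentwise, intro conjI ballI)
  show "sel k D \<phi> ` topspace (product_topology (\<lambda>i. circle) {1..m}) \<subseteq> extensional {1..k}"
    by (auto simp: sel_def)
  fix i assume i: "i \<in> {1..k}"
  show "continuous_map (product_topology (\<lambda>i. circle) {1..m}) circle (\<lambda>x. sel k D \<phi> x i)"
  proof (cases "i \<in> D")
    case True
    have "continuous_map (product_topology (\<lambda>i. circle) {1..m}) circle (\<lambda>x. x (\<phi> i))"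
      using assms[OF True i] by (intro continuous_map_product_projection) auto
    then show ?thesis using i True by (simp add: sel_def)
  next
    case False
    have "continuous_map (product_topology (\<lambda>i. circle) {1..m}) circle (\<lambda>x. 1)"
      by (simp add: circle_def)
    then show ?thesis using i False by (simp add: sel_def)
  qed
qed

definition emb :: "nat \<Rightarrow> nat \<Rightarrow> (nat \<Rightarrow> nat) \<Rightarrow> (nat \<Rightarrow> complex) \<Rightarrow> (nat \<Rightarrow> complex)" where
  "emb n k \<iota> = sel n (\<iota> ` {1..k}) (the_inv_into {1..k} \<iota>)"

lemma ord_inj_inj: "ord_inj k n \<iota> \<Longrightarrow> inj_on \<iota> {1..k}"
  by (auto simp: ord_inj_def intro: strict_mono_on_imp_inj_on)

lemma cont_emb:
  assumes "ord_inj k n \<iota>"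
  shows "continuous_map (torus k) (torus n) (emb n k \<iota>)"
  unfolding emb_def
proof (rule cont_sel)
  fix i assume "i \<in> \<iota> ` {1..k}"
  then show "the_inv_into {1..k} \<iota> i \<in> {1..k}"
    using the_inv_into_into[OF ord_inj_inj[OF assms]] by blast
qed

lemma proj_emb:
  assumes "ord_inj k n \<iota>" "t \<in> topspace (torus k)"
  shows "std_proj k \<iota> (emb n k \<iota> t) = t"
proof -
  have inj: "inj_on \<iota> {1..k}" using ord_inj_inj[OF assms(1)] .
  have t: "t \<in> extensional {1..k}" using assms(2) by (simp add: topspace_torus PiE_def)
  show ?thesis
  proof (rule extensionalityI[OF _ t])
    show "std_proj k \<iota> (emb n k \<iota> t) \<in> extensional {1..k}" by (simp add: std_proj_def)
    fix j assume j: "j \<in> {1..k}"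
    then have "\<iota> j \<in> {1..n}" using assms(1) by (auto simp: ord_inj_def)
    then show "std_proj k \<iota> (emb n k \<iota> t) j = t j"
      using j the_inv_into_f_f[OF inj j] by (simp add: std_proj_def emb_def sel_def)
  qed
qed

lemma homotopic_from_proj:
  assumes o: "ord_inj k n \<iota>" and f1: "continuous_map (torus k) X f1"
    and f2: "continuous_map (torus k) X f2"
    and h: "homotopic_with (\<lambda>_. True) (torus n) X (f1 \<circ> std_proj k \<iota>) (f2 \<circ> std_proj k \<iota>)"
  shows "homotopic_with (\<lambda>_. True) (torus k) X f1 f2"
proof -
  have "homotopic_with (\<lambda>_. True) (torus k) X (f1 \<circ> std_proj k \<iota> \<circ> emb n k \<iota>) (f2 \<circ> std_proj k \<iota> \<circ> emb n k \<iota>)"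
    by (rule homotopic_with_compose_continuous_map_right[OF h cont_emb[OF o]]) auto
  then show ?thesis
    by (rule homotopic_with_eq) (auto simp: proj_emb[OF o])
qed

lemma key:
  assumes o1: "ord_inj k1 n \<iota>1" and o2: "ord_inj k2 n \<iota>2"
    and f1: "continuous_map (torus k1) X f1" and f2: "continuous_map (torus k2) X f2"
    and h: "homotopic_with (\<lambda>_. True) (torus n) X (f1 \<circ> std_proj k1 \<iota>1) (f2 \<circ> std_proj k2 \<iota>2)"
  shows "\<exists>m \<kappa> h. ord_inj m k1 \<kappa> \<and> \<kappa> ` {1..m} = {j\<in>{1..k1}. \<iota>1 j \<in> \<iota>2 ` {1..k2}} \<and>
     continuous_map (torus m) X h \<and> homotopic_with (\<lambda>_. True) (torus k1) X f1 (h \<circ> std_proj m \<kappa>)"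
proof -
  define S where "S = {j\<in>{1..k1}. \<iota>1 j \<in> \<iota>2 ` {1..k2}}"
  define m where "m = card S"
  obtain \<kappa> where \<kappa>: "ord_inj m k1 \<kappa>" "\<kappa> ` {1..m} = S"
  proof -
    have "S \<subseteq> {1..k1}" unfolding S_def by blast
    from ord_inj_exists[OF this] show ?thesis using that unfolding m_def by blast
  qed
  have inj1: "inj_on \<iota>1 {1..k1}" using ord_inj_inj[OF o1] .
  have injk: "inj_on \<kappa> {1..m}" using ord_inj_inj[OF \<kappa>(1)] .
  define e where "e = emb n k1 \<iota>1"
  define g where "g = sel k2 {i. \<iota>2 i \<in> \<iota>1 ` {1..k1}}
      (\<lambda>i. the_inv_into {1..m} \<kappa> (the_inv_into {1..k1} \<iota>1 (\<iota>2 i)))"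
  have ce: "continuous_map (torus k1) (torus n) e" unfolding e_def using cont_emb[OF o1] .
  have cg: "continuous_map (torus m) (torus k2) g"
    unfolding g_def
  proof (rule cont_sel)
    fix i assume i: "i \<in> {i. \<iota>2 i \<in> \<iota>1 ` {1..k1}}" "i \<in> {1..k2}"
    define j where "j = the_inv_into {1..k1} \<iota>1 (\<iota>2 i)"
    have mem: "\<iota>2 i \<in> \<iota>1 ` {1..k1}" using i by simp
    have j: "j \<in> {1..k1}" "\<iota>1 j = \<iota>2 i"
      unfolding j_def using the_inv_into_into[OF inj1 mem order_refl] f_the_inv_into_f[OF inj1 mem] by auto
    then have "j \<in> \<kappa> ` {1..m}" using i \<kappa>(2) unfolding S_def by auto
    then show "the_inv_into {1..m} \<kappa> (the_inv_into {1..k1} \<iota>1 (\<iota>2 i)) \<in> {1..m}"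
      using the_inv_into_into[OF injk] unfolding j_def by blast
  qed
  have eq: "std_proj k2 \<iota>2 (e t) = g (std_proj m \<kappa> t)" for t
  proof (rule ext)
    fix i
    show "std_proj k2 \<iota>2 (e t) i = g (std_proj m \<kappa> t) i"
    proof (cases "i \<in> {1..k2} \<and> \<iota>2 i \<in> \<iota>1 ` {1..k1}")
      case True
      define j where "j = the_inv_into {1..k1} \<iota>1 (\<iota>2 i)"
      have mem: "\<iota>2 i \<in> \<iota>1 ` {1..k1}" using True by simp
      have j: "j \<in> {1..k1}" "\<iota>1 j = \<iota>2 i"
        unfolding j_def using the_inv_into_into[OF inj1 mem order_refl] f_the_inv_into_f[OF inj1 mem] by auto
      then have jk: "j \<in> \<kappa> ` {1..m}" using True \<kappa>(2) unfolding S_def by auto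
      have "\<iota>2 i \<in> {1..n}" using funcset_mem[OF ord_inj_Pi[OF o2]] True by blast
      have inv: "the_inv_into {1..m} \<kappa> j \<in> {1..m}" "\<kappa> (the_inv_into {1..m} \<kappa> j) = j"
        using the_inv_into_into[OF injk jk order_refl] f_the_inv_into_f[OF injk jk] by auto
      have "std_proj k2 \<iota>2 (e t) i = t j"
        using True \<open>\<iota>2 i \<in> {1..n}\<close> by (simp add: std_proj_def e_def emb_def sel_def j_def)
      moreover have "g (std_proj m \<kappa> t) i = std_proj m \<kappa> t (the_inv_into {1..m} \<kappa> j)"
        using True by (simp add: g_def sel_def j_def)
      moreover have "std_proj m \<kappa> t (the_inv_into {1..m} \<kappa> j) = t j"
        using inv by (simp add: std_proj_def)
      ultimately show ?thesis by simp
    next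
      case False
      have "i \<in> {1..k2} \<Longrightarrow> \<iota>2 i \<in> {1..n}" using o2 by (auto simp: ord_inj_def)
      then show ?thesis using False
        by (auto simp: std_proj_def e_def emb_def sel_def g_def)
    qed
  qed
  have h1: "homotopic_with (\<lambda>_. True) (torus k1) X (f1 \<circ> std_proj k1 \<iota>1 \<circ> e) (f2 \<circ> std_proj k2 \<iota>2 \<circ> e)"
    by (rule homotopic_with_compose_continuous_map_right[OF h ce]) auto
  have h2: "homotopic_with (\<lambda>_. True) (torus k1) X f1 ((f2 \<circ> g) \<circ> std_proj m \<kappa>)"
    by (rule homotopic_with_eq[OF h1]) (auto simp: e_def proj_emb[OF o1] eq[unfolded e_def])
  have "continuous_map (torus m) X (f2 \<circ> g)" using cg f2 by (rule continuous_map_compose)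
  then show ?thesis using h2 \<kappa> unfolding S_def
    by (intro exI[of _ m] exI[of _ \<kappa>] exI[of _ "f2 \<circ> g"]) simp
qed

lemma sub:
  assumes o1: "ord_inj k1 n \<iota>1" and o2: "ord_inj k2 n \<iota>2"
    and f1: "continuous_map (torus k1) X f1" and f2: "continuous_map (torus k2) X f2"
    and h: "homotopic_with (\<lambda>_. True) (torus n) X (f1 \<circ> std_proj k1 \<iota>1) (f2 \<circ> std_proj k2 \<iota>2)"
    and nw: "new X k1 (hclass X k1 f1)"
  shows "\<iota>1 ` {1..k1} \<subseteq> \<iota>2 ` {1..k2}"
proof (rule ccontr)
  assume ns: "\<not> ?thesis"
  obtain m \<kappa> h where mk: "ord_inj m k1 \<kappa>" "\<kappa> ` {1..m} = {j\<in>{1..k1}. \<iota>1 j \<in> \<iota>2 ` {1..k2}}"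
    and ch: "continuous_map (torus m) X h"
    and hh: "homotopic_with (\<lambda>_. True) (torus k1) X f1 (h \<circ> std_proj m \<kappa>)"
    using key[OF o1 o2 f1 f2 h] by blast
  have "{j\<in>{1..k1}. \<iota>1 j \<in> \<iota>2 ` {1..k2}} \<subset> {1..k1}" using ns by auto
  then have "card {j\<in>{1..k1}. \<iota>1 j \<in> \<iota>2 ` {1..k2}} < k1"
    using psubset_card_mono[OF finite_atLeastAtMost] by (metis card_atLeastAtMost diff_Suc_1)
  moreover have "card (\<kappa> ` {1..m}) = m" using card_image[OF ord_inj_inj[OF mk(1)]] by simp
  ultimately have mlt: "m < k1" using mk(2) by simp
  have kP: "\<kappa> \<in> {1..m} \<rightarrow> {1..k1}" using ord_inj_Pi[OF mk(1)] .
  have c2: "continuous_map (torus k1) X (h \<circ> std_proj m \<kappa>)"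
    using cont_std_proj[OF kP] ch by (rule continuous_map_compose)
  have "hclass X k1 f1 = induced X k1 m \<kappa> (hclass X m h)"
    using induced_hclass[OF ch kP] hclass_eq[OF f1 c2] hh by simp
  moreover have "hclass X m h \<in> pi0L X m" using ch by (simp add: pi0L_def)
  ultimately have "old X k1 (hclass X k1 f1)"
    unfolding old_def using mlt mk(1) by blast
  with nw show False by (simp add: new_def)
qed

lemma uniq:
  assumes o1: "ord_inj k1 n \<iota>1" and n1: "new X k1 \<gamma>1" and e1: "\<gamma> = induced X n k1 \<iota>1 \<gamma>1"
    and o2: "ord_inj k2 n \<iota>2" and n2: "new X k2 \<gamma>2" and e2: "\<gamma> = induced X n k2 \<iota>2 \<gamma>2"
  shows "k1 = k2 \<and> \<iota>1 = \<iota>2 \<and> \<gamma>1 = \<gamma>2"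
proof -
  obtain f1 where f1: "continuous_map (torus k1) X f1" "\<gamma>1 = hclass X k1 f1"
    using n1 by (auto simp: new_def pi0L_def)
  obtain f2 where f2: "continuous_map (torus k2) X f2" "\<gamma>2 = hclass X k2 f2"
    using n2 by (auto simp: new_def pi0L_def)
  have c1: "continuous_map (torus n) X (f1 \<circ> std_proj k1 \<iota>1)"
    using cont_std_proj[OF ord_inj_Pi[OF o1]] f1(1) by (rule continuous_map_compose)
  have c2: "continuous_map (torus n) X (f2 \<circ> std_proj k2 \<iota>2)"
    using cont_std_proj[OF ord_inj_Pi[OF o2]] f2(1) by (rule continuous_map_compose)
  have "hclass X n (f1 \<circ> std_proj k1 \<iota>1) = hclass X n (f2 \<circ> std_proj k2 \<iota>2)"
    using e1 e2 f1 f2 induced_hclass[OF f1(1) ord_inj_Pi[OF o1]] induced_hclass[OF f2(1) ord_inj_Pi[OF o2]]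
    by simp
  then have h: "homotopic_with (\<lambda>_. True) (torus n) X (f1 \<circ> std_proj k1 \<iota>1) (f2 \<circ> std_proj k2 \<iota>2)"
    using hclass_eq[OF c1 c2] by simp
  have s1: "\<iota>1 ` {1..k1} \<subseteq> \<iota>2 ` {1..k2}"
    using sub[OF o1 o2 f1(1) f2(1) h] n1 f1(2) by simp
  have s2: "\<iota>2 ` {1..k2} \<subseteq> \<iota>1 ` {1..k1}"
    using sub[OF o2 o1 f2(1) f1(1) h[unfolded homotopic_with_sym[of _ _ _ "f1 \<circ> _"]]] n2 f2(2) by simp
  from ord_inj_unique[OF o1 o2] s1 s2 have ki: "k1 = k2" "\<iota>1 = \<iota>2" by auto
  have f2': "continuous_map (torus k1) X f2" using f2(1) ki(1) by simp
  have hom: "homotopic_with (\<lambda>_. True) (torus k1) X f1 f2"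
    using homotopic_from_proj[OF o1 f1(1) f2'] h ki by simp
  have "hclass X k1 f1 = hclass X k1 f2" using hclass_eq[OF f1(1) f2'] hom by (rule iffD2)
  then have "\<gamma>1 = \<gamma>2" using f1(2) f2(2) ki(1) by simp
  with ki show ?thesis by simp
qed

lemma exist:
  assumes "\<gamma> \<in> pi0L X n"
  shows "\<exists>k \<iota> \<gamma>'. ord_inj k n \<iota> \<and> new X k \<gamma>' \<and> \<gamma> = induced X n k \<iota> \<gamma>'"
proof -
  obtain f0 where f0: "continuous_map (torus n) X f0" "\<gamma> = hclass X n f0"
    using assms by (auto simp: pi0L_def)
  define P where "P k \<longleftrightarrow> (\<exists>\<iota> \<gamma>'. ord_inj k n \<iota> \<and> \<gamma>' \<in> pi0L X k \<and> \<gamma> = induced X n k \<iota> \<gamma>')" for k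
  define \<iota>0 where "\<iota>0 = restrict id {1..n}"
  have o0: "ord_inj n n \<iota>0" by (auto simp: ord_inj_def \<iota>0_def strict_mono_on_def)
  have c0: "continuous_map (torus n) X (f0 \<circ> std_proj n \<iota>0)"
    using cont_std_proj[OF ord_inj_Pi[OF o0]] f0(1) by (rule continuous_map_compose)
  have "homotopic_with (\<lambda>_. True) (torus n) X f0 (f0 \<circ> std_proj n \<iota>0)"
  proof (rule homotopic_with_equal[OF _ _ f0(1)])
    fix t assume "t \<in> topspace (torus n)"
    then have "t \<in> extensional {1..n}" by (simp add: topspace_torus PiE_def)
    then have "std_proj n \<iota>0 t = t"
      by (auto simp: std_proj_def \<iota>0_def fun_eq_iff extensional_def)
    then show "f0 t = (f0 \<circ> std_proj n \<iota>0) t" by simp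
  qed auto
  then have "\<gamma> = induced X n n \<iota>0 \<gamma>"
    using induced_hclass[OF f0(1) ord_inj_Pi[OF o0]] hclass_eq[OF f0(1) c0] f0(2) by simp
  then have "P n" unfolding P_def using o0 assms by blast
  define k where "k = (LEAST k. P k)"
  have Pk: "P k" unfolding k_def by (rule LeastI[of P, OF \<open>P n\<close>])
  then obtain \<iota> \<gamma>' where i: "ord_inj k n \<iota>" "\<gamma>' \<in> pi0L X k" "\<gamma> = induced X n k \<iota> \<gamma>'"
    unfolding P_def by blast
  have "new X k \<gamma>'"
    unfolding new_def
  proof (intro conjI notI)
    show "\<gamma>' \<in> pi0L X k" by fact
    assume "old X k \<gamma>'"
    then obtain k' \<kappa> c' where kk: "k' < k" "ord_inj k' k \<kappa>" "c' \<in> pi0L X k'" "\<gamma>' = induced X k k' \<kappa> c'"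
      unfolding old_def by blast
    obtain f'' where f'': "continuous_map (torus k') X f''" "c' = hclass X k' f''"
      using kk(3) by (auto simp: pi0L_def)
    have kP: "\<kappa> \<in> {1..k'} \<rightarrow> {1..k}" using ord_inj_Pi[OF kk(2)] .
    have cc: "continuous_map (torus k) X (f'' \<circ> std_proj k' \<kappa>)"
      using cont_std_proj[OF kP] f''(1) by (rule continuous_map_compose)
    have "\<gamma> = hclass X n (f'' \<circ> std_proj k' \<kappa> \<circ> std_proj k \<iota>)"
      using i(3) kk(4) f''(2) induced_hclass[OF f''(1) kP] induced_hclass[OF cc ord_inj_Pi[OF i(1)]]
      by simp
    also have "f'' \<circ> std_proj k' \<kappa> \<circ> std_proj k \<iota> = f'' \<circ> std_proj k' (restrict (\<iota> \<circ> \<kappa>) {1..k'})"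
      by (rule ext) (simp add: std_proj_comp[OF kP])
    also have "hclass X n \<dots> = induced X n k' (restrict (\<iota> \<circ> \<kappa>) {1..k'}) c'"
      using induced_hclass[OF f''(1) ord_inj_Pi[OF ord_inj_comp[OF kk(2) i(1)]]] f''(2) by simp
    finally have "P k'" unfolding P_def using ord_inj_comp[OF kk(2) i(1)] kk(3) by blast
    with kk(1) show False unfolding k_def using not_less_Least by blast
  qed
  with i show ?thesis by blast
qed

theorem proposition2p5:
  fixes X :: "'a topology" and n :: nat
  assumes "\<gamma> \<in> pi0L X n"
  shows "\<exists>!(k, \<iota>, \<gamma>'). ord_inj k n \<iota> \<and> new X k \<gamma>' \<and> \<gamma> = induced X n k \<iota> \<gamma>'"
proof -
  obtain k \<iota> \<gamma>' where e: "ord_inj k n \<iota> \<and> new X k \<gamma>' \<and> \<gamma> = induced X n k \<iota> \<gamma>'"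
    using exist[OF assms] by blast
  show ?thesis
  proof (rule ex1I[of _ "(k, \<iota>, \<gamma>')"])
    show "case (k, \<iota>, \<gamma>') of (k, \<iota>, \<gamma>') \<Rightarrow> ord_inj k n \<iota> \<and> new X k \<gamma>' \<and> \<gamma> = induced X n k \<iota> \<gamma>'"
      using e by simp
  next
    fix y assume "case y of (k, \<iota>, \<gamma>') \<Rightarrow> ord_inj k n \<iota> \<and> new X k \<gamma>' \<and> \<gamma> = induced X n k \<iota> \<gamma>'"
    then obtain k2 \<iota>2 \<gamma>2 where y: "y = (k2, \<iota>2, \<gamma>2)" "ord_inj k2 n \<iota>2" "new X k2 \<gamma>2" "\<gamma> = induced X n k2 \<iota>2 \<gamma>2"
      by (cases y) auto
    have "k2 = k \<and> \<iota>2 = \<iota> \<and> \<gamma>2 = \<gamma>'"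
      using e by (intro uniq[OF y(2-4)]) auto
    then show "y = (k, \<iota>, \<gamma>')" using y(1) by simp
  qed
qed

end
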